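(* Let $\mathcal{R}$ be a left-connected rewriting system over a signature $\Sigma$, let $L_1$ and $L_2$ be the left-hand sides of two rules of $\mathcal{R}$, and let $(g_1,g_2\colon G\to L_1+L_2)$ be a gluing scheme that yields a pre-critical pair. If a node $A$ of $L_1$ and a node $B$ of $L_2$ are glued, then one of the following holds: (a) there are glued hyperedges $e_1$ of $L_1$ and $e_2$ of $L_2$ and an index $k$ such that $A$ is the $k$-th source of $e_1$ and $B$ is the $k$-th source of $e_2$; (b) there are glued hyperedges $e_1$ of $L_1$ and $e_2$ of $L_2$ and an index $i$ such that $A$ is the $i$-th target of $e_1$ and $B$ is the $i$-th target of $e_2$; (c) $A\in out(L_1)$ and $B\in in(L_2)$; (d) $A\in in(L_1)$ and $B\in out(L_2)$.
   Context: A signature $\Sigma$ is a set of triples $(x,n,m)$ (label, arity, coarity). A $\Sigma$-hypergraph $G=(V,E,s,t,l)$ has finite sets $V$ (nodes), $E$ (hyperedges), maps $s,t\colon E\to V^*$ (lists of sources/targets) and a labelling $l\colon E\to\Sigma$ sending a hyperedge with $n$ sources and $m$ targets to some $(x,n,m)$. Morphisms $f=(f_V,f_E)$ preserve sources, targets and labels; they form the category $\mathbf{Hyp}_\Sigma$, where colimits are computed componentwise and monos/epis are injective/surjective on nodes and hyperedges. Composition is written $f;g$; $\iota_1,\iota_2$ are coprojections. A hypergraph is discrete if it has no hyperedges. A path is a list of hyperedges $[e_1,\dots,e_n]$ with some target of $e_k$ equal to a source of $e_{k+1}$ for each $k$; it goes from $v$ to $v'$ if $v$ is a source of $e_1$ and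 $v'$ a target of $e_n$; a cycle is a path with some source of $e_1$ a target of $e_n$. In-degree (out-degree) of a node $v$: number of pairs $(e,i)$ with $v$ the $i$-th target (source) of $e$; $in(H)$, $out(H)$: nodes of in-degree $0$, out-degree $0$. $H$ is ma (monogamous acyclic) if it has no cycle and all in- and out-degrees are $\le 1$. A cospan $I\to H\leftarrow O$ with $I,O$ discrete is an ma-cospan if $H$ is ma and the legs are mono with images $in(H)$ and $out(H)$. $H$ is strongly connected if for all $x\in in(H)$, $y\in out(H)$ there is a path from $x$ to $y$. A left-connected rule is a span $L\xleftarrow{[i_L,o_L]}I+O\xrightarrow{[i_R,o_R]}R$ with $I,O$ discrete, $I\to L\leftarrow O$ and $I\to R\leftarrow O$ ma-cospans, $[i_L,o_L]$ mono and $L$ strongly connected; a left-connected rewriting system is a finite set of such rules. A convex match is a mono $m\colon L\to G$ such that every path in $G$ between two nodes of $m(L)$ has all its hyperedges in $m(L)$. A derivation between ma-cospans $n\to G\leftarrow m$ and $n\to H\leftarrow m$ via a rule $L\leftarrow K\to R$ is given by a convex match $L\to G$ and a double-pushout diagram $L\leftarrow K\to R$ over $G\leftarrow C\to H$ with both squares pushouts (the left one a boundary complement, which is automatic for left-connected systems) commuting with the interface $n+m$; for left-connected systems mono matches are automatically convex and pushout complements exist uniquely. A pre-critical pair consists of two derivations, via rules with left-hand sides $L_1,L_2$, from a common ma-cospan $n\to S\leftarrow m$ with matches $m_1,m_2$ such that $[m_1,m_2]\colon L_1+L_2\to S$ is epi. A gluing scheme for $L_1,L_2$ is a $\Sigma$-hypergraph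 $G$ with morphisms $g_1,g_2\colon G\to L_1+L_2$; its gluing is the coequaliser $\epsilon\colon L_1+L_2\to S=\mathtt{coeq}(g_1,g_2)$. Two nodes (or hyperedges) $x,x'$ of $L_1+L_2$ are glued if some node (hyperedge) $y$ of $G$ has $g_1(y)=x$, $g_2(y)=x'$. The gluing scheme yields a pre-critical pair if $\iota_1;\epsilon$ and $\iota_2;\epsilon$ are mono and $in(S)\xrightarrow{\subseteq}S\xleftarrow{\subseteq}out(S)$ is an ma-cospan; the pre-critical pair is then formed by the (unique) derivations from this ma-cospan with matches $\iota_1;\epsilon$ and $\iota_2;\epsilon$. *)

theory Defs
  imports Main
begin

record ('v, 'e, 'l) hyp =
  nodes :: "'v set"
  edges :: "'e set"
  src   :: "'e \<Rightarrow> 'v list"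
  tgt   :: "'e \<Rightarrow> 'v list"
  lab   :: "'e \<Rightarrow> 'l"

type_synonym 'l signature = "('l \<times> nat \<times> nat) set"

definition hypergraph :: "'l signature \<Rightarrow> ('v, 'e, 'l) hyp \<Rightarrow> bool" where
  "hypergraph Sig H \<longleftrightarrow> finite (nodes H) \<and> finite (edges H) \<and>
     (\<forall>e\<in>edges H. set (src H e) \<subseteq> nodes H \<and> set (tgt H e) \<subseteq> nodes H \<and>
        (lab H e, length (src H e), length (tgt H e)) \<in> Sig)"

definition hom :: "('v, 'e, 'l) hyp \<Rightarrow> ('w, 'f, 'l) hyp \<Rightarrow> ('v \<Rightarrow> 'w) \<Rightarrow> ('e \<Rightarrow> 'f) \<Rightarrow> bool" where
  "hom G H fV fE \<longleftrightarrow> fV ` nodes G \<subseteq> nodes H \<and> fE ` edges G \<subseteq> edges H \<and>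
     (\<forall>e\<in>edges G. src H (fE e) = map fV (src G e) \<and> tgt H (fE e) = map fV (tgt G e) \<and>
        lab H (fE e) = lab G e)"

definition mono_hom :: "('v, 'e, 'l) hyp \<Rightarrow> ('w, 'f, 'l) hyp \<Rightarrow> ('v \<Rightarrow> 'w) \<Rightarrow> ('e \<Rightarrow> 'f) \<Rightarrow> bool" where
  "mono_hom G H fV fE \<longleftrightarrow> hom G H fV fE \<and> inj_on fV (nodes G) \<and> inj_on fE (edges G)"

definition discrete :: "('v, 'e, 'l) hyp \<Rightarrow> bool" where
  "discrete H \<longleftrightarrow> edges H = {}"

definition discrete_on :: "'v set \<Rightarrow> ('v, 'e, 'l) hyp" where
  "discrete_on V = \<lparr>nodes = V, edges = {}, src = (\<lambda>_. []), tgt = (\<lambda>_. []), lab = (\<lambda>_. undefined)\<rparr>"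

definition hsum :: "('v, 'e, 'l) hyp \<Rightarrow> ('w, 'f, 'l) hyp \<Rightarrow> ('v + 'w, 'e + 'f, 'l) hyp" where
  "hsum G H = \<lparr>nodes = nodes G <+> nodes H, edges = edges G <+> edges H,
     src = case_sum (\<lambda>e. map Inl (src G e)) (\<lambda>e. map Inr (src H e)),
     tgt = case_sum (\<lambda>e. map Inl (tgt G e)) (\<lambda>e. map Inr (tgt H e)),
     lab = case_sum (lab G) (lab H)\<rparr>"

definition indeg :: "('v, 'e, 'l) hyp \<Rightarrow> 'v \<Rightarrow> nat" where
  "indeg H v = card {(e, i). e \<in> edges H \<and> i < length (tgt H e) \<and> tgt H e ! i = v}"

definition outdeg :: "('v, 'e, 'l) hyp \<Rightarrow> 'v \<Rightarrow> nat" where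
  "outdeg H v = card {(e, i). e \<in> edges H \<and> i < length (src H e) \<and> src H e ! i = v}"

definition in_nodes :: "('v, 'e, 'l) hyp \<Rightarrow> 'v set" where
  "in_nodes H = {v \<in> nodes H. indeg H v = 0}"

definition out_nodes :: "('v, 'e, 'l) hyp \<Rightarrow> 'v set" where
  "out_nodes H = {v \<in> nodes H. outdeg H v = 0}"

definition is_path :: "('v, 'e, 'l) hyp \<Rightarrow> 'e list \<Rightarrow> bool" where
  "is_path H es \<longleftrightarrow> es \<noteq> [] \<and> set es \<subseteq> edges H \<and>
     (\<forall>k. Suc k < length es \<longrightarrow> (\<exists>v. v \<in> set (tgt H (es ! k)) \<and> v \<in> set (src H (es ! Suc k))))"

definition path_from_to :: "('v, 'e, 'l) hyp \<Rightarrow> 'e list \<Rightarrow> 'v \<Rightarrow> 'v \<Rightarrow> bool" where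
  "path_from_to H es v v' \<longleftrightarrow> is_path H es \<and> v \<in> set (src H (hd es)) \<and> v' \<in> set (tgt H (last es))"

definition is_cycle :: "('v, 'e, 'l) hyp \<Rightarrow> 'e list \<Rightarrow> bool" where
  "is_cycle H es \<longleftrightarrow> is_path H es \<and> (\<exists>v. v \<in> set (src H (hd es)) \<and> v \<in> set (tgt H (last es)))"

definition hyp_acyclic :: "('v, 'e, 'l) hyp \<Rightarrow> bool" where
  "hyp_acyclic H \<longleftrightarrow> \<not> (\<exists>es. is_cycle H es)"

definition ma :: "('v, 'e, 'l) hyp \<Rightarrow> bool" where
  "ma H \<longleftrightarrow> hyp_acyclic H \<and> (\<forall>v\<in>nodes H. indeg H v \<le> 1 \<and> outdeg H v \<le> 1)"

definition strongly_connected :: "('v, 'e, 'l) hyp \<Rightarrow> bool" where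
  "strongly_connected H \<longleftrightarrow>
     (\<forall>x\<in>in_nodes H. \<forall>y\<in>out_nodes H. \<exists>es. path_from_to H es x y)"

text \<open>ma-cospan I -> H <- O. Since I and O are discrete, morphisms out of them are
determined by their node maps (the edge map, here the identity, acts on the empty set).\<close>

definition ma_cospan :: "('w, 'e, 'l) hyp \<Rightarrow> ('v, 'e, 'l) hyp \<Rightarrow> ('w, 'e, 'l) hyp \<Rightarrow>
    ('w \<Rightarrow> 'v) \<Rightarrow> ('w \<Rightarrow> 'v) \<Rightarrow> bool" where
  "ma_cospan I H Ou iV oV \<longleftrightarrow> discrete I \<and> discrete Ou \<and> ma H \<and>
     mono_hom I H iV id \<and> mono_hom Ou H oV id \<and>
     iV ` nodes I = in_nodes H \<and> oV ` nodes Ou = out_nodes H"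

record ('v, 'e, 'w, 'l) rule =
  lhs :: "('v, 'e, 'l) hyp"
  rhs :: "('v, 'e, 'l) hyp"
  ifc_in :: "('w, 'e, 'l) hyp"
  ifc_out :: "('w, 'e, 'l) hyp"
  iL :: "'w \<Rightarrow> 'v"
  oL :: "'w \<Rightarrow> 'v"
  iR :: "'w \<Rightarrow> 'v"
  oR :: "'w \<Rightarrow> 'v"

definition left_connected_rule :: "'l signature \<Rightarrow> ('v, 'e, 'w, 'l) rule \<Rightarrow> bool" where
  "left_connected_rule Sig r \<longleftrightarrow>
     hypergraph Sig (lhs r) \<and> hypergraph Sig (rhs r) \<and>
     hypergraph Sig (ifc_in r) \<and> hypergraph Sig (ifc_out r) \<and>
     discrete (ifc_in r) \<and> discrete (ifc_out r) \<and>
     ma_cospan (ifc_in r) (lhs r) (ifc_out r) (iL r) (oL r) \<and>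
     ma_cospan (ifc_in r) (rhs r) (ifc_out r) (iR r) (oR r) \<and>
     mono_hom (hsum (ifc_in r) (ifc_out r)) (lhs r) (case_sum (iL r) (oL r)) (case_sum id id) \<and>
     hom (hsum (ifc_in r) (ifc_out r)) (rhs r) (case_sum (iR r) (oR r)) (case_sum id id) \<and>
     strongly_connected (lhs r)"

definition left_connected_system :: "'l signature \<Rightarrow> ('v, 'e, 'w, 'l) rule set \<Rightarrow> bool" where
  "left_connected_system Sig Rs \<longleftrightarrow> finite Rs \<and> (\<forall>r\<in>Rs. left_connected_rule Sig r)"

definition gluing_scheme :: "'l signature \<Rightarrow> ('u, 'f, 'l) hyp \<Rightarrow> ('v, 'e, 'l) hyp \<Rightarrow> ('v, 'e, 'l) hyp \<Rightarrow>
    ('u \<Rightarrow> 'v + 'v) \<Rightarrow> ('f \<Rightarrow> 'e + 'e) \<Rightarrow> ('u \<Rightarrow> 'v + 'v) \<Rightarrow> ('f \<Rightarrow> 'e + 'e) \<Rightarrow> bool" where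
  "gluing_scheme Sig G L1 L2 g1V g1E g2V g2E \<longleftrightarrow> hypergraph Sig G \<and>
     hom G (hsum L1 L2) g1V g1E \<and> hom G (hsum L1 L2) g2V g2E"

definition glue_rel :: "'u set \<Rightarrow> ('u \<Rightarrow> 'a) \<Rightarrow> ('u \<Rightarrow> 'a) \<Rightarrow> ('a \<times> 'a) set" where
  "glue_rel Y g1 g2 = {(g1 y, g2 y) | y. y \<in> Y}"

definition cls :: "('a \<times> 'a) set \<Rightarrow> 'a \<Rightarrow> 'a set" where
  "cls R x = {x'. (x, x') \<in> (R \<union> R\<inverse>)\<^sup>*}"

text \<open>The coequaliser, computed componentwise as a quotient; the coequalising map is
cls (on nodes and on hyperedges).\<close>
definition coeq :: "('u, 'f, 'l) hyp \<Rightarrow> ('a, 'b, 'l) hyp \<Rightarrow>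
    ('u \<Rightarrow> 'a) \<Rightarrow> ('f \<Rightarrow> 'b) \<Rightarrow> ('u \<Rightarrow> 'a) \<Rightarrow> ('f \<Rightarrow> 'b) \<Rightarrow> ('a set, 'b set, 'l) hyp" where
  "coeq G H g1V g1E g2V g2E =
     (let RV = glue_rel (nodes G) g1V g2V; RE = glue_rel (edges G) g1E g2E in
      \<lparr>nodes = cls RV ` nodes H, edges = cls RE ` edges H,
       src = (\<lambda>c. map (cls RV) (src H (SOME e. e \<in> c))),
       tgt = (\<lambda>c. map (cls RV) (tgt H (SOME e. e \<in> c))),
       lab = (\<lambda>c. lab H (SOME e. e \<in> c))\<rparr>)"

definition yields_pcp :: "('u, 'f, 'l) hyp \<Rightarrow> ('v, 'e, 'l) hyp \<Rightarrow> ('v, 'e, 'l) hyp \<Rightarrow>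
    ('u \<Rightarrow> 'v + 'v) \<Rightarrow> ('f \<Rightarrow> 'e + 'e) \<Rightarrow> ('u \<Rightarrow> 'v + 'v) \<Rightarrow> ('f \<Rightarrow> 'e + 'e) \<Rightarrow> bool" where
  "yields_pcp G L1 L2 g1V g1E g2V g2E \<longleftrightarrow>
     (let S = coeq G (hsum L1 L2) g1V g1E g2V g2E;
          epsV = cls (glue_rel (nodes G) g1V g2V);
          epsE = cls (glue_rel (edges G) g1E g2E) in
      mono_hom L1 S (epsV \<circ> Inl) (epsE \<circ> Inl) \<and>
      mono_hom L2 S (epsV \<circ> Inr) (epsE \<circ> Inr) \<and>
      ma_cospan (discrete_on (in_nodes S)) S (discrete_on (out_nodes S)) id id)"

definition glued :: "'u set \<Rightarrow> ('u \<Rightarrow> 'a) \<Rightarrow> ('u \<Rightarrow> 'a) \<Rightarrow> 'a \<Rightarrow> 'a \<Rightarrow> bool" where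
  "glued Y g1 g2 x x' \<longleftrightarrow> (\<exists>y\<in>Y. g1 y = x \<and> g2 y = x')"

end

theory Submission
  imports Defs
begin

lemma fin_pairs:
  assumes "finite E"
  shows "finite {(e, i). e \<in> E \<and> i < length (f e) \<and> P e i}"
  by (rule finite_subset[OF _ finite_SigmaI[OF assms, of "\<lambda>e. {..<length (f e)}"]]) auto

lemma cls_eq_rt:
  assumes "(x, y) \<in> (R \<union> R\<inverse>)\<^sup>*"
  shows "cls R x = cls R y"
proof -
  have sym: "(y, x) \<in> (R \<union> R\<inverse>)\<^sup>*"
  proof -
    have "(y, x) \<in> ((R \<union> R\<inverse>)\<inverse>)\<^sup>*" using assms by (simp add: rtrancl_converse)
    moreover have "(R \<union> R\<inverse>)\<inverse> = R \<union> R\<inverse>" by auto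
    ultimately show ?thesis by simp
  qed
  show ?thesis unfolding cls_def
    using assms sym by (auto intro: rtrancl_trans)
qed

lemma glue_cls_eq:
  assumes "y \<in> Y"
  shows "cls (glue_rel Y g1 g2) (g1 y) = cls (glue_rel Y g1 g2) (g2 y)"
  by (rule cls_eq_rt) (use assms in \<open>auto simp: glue_rel_def\<close>)

lemma glued_from_cls:
  fixes g1 g2 :: "'u \<Rightarrow> 'a + 'b"
  assumes img1: "g1 ` Y \<subseteq> D1 <+> D2" and img2: "g2 ` Y \<subseteq> D1 <+> D2"
    and inj1: "inj_on (cls (glue_rel Y g1 g2) \<circ> Inl) D1"
    and inj2: "inj_on (cls (glue_rel Y g1 g2) \<circ> Inr) D2"
    and a: "a \<in> D1" and b: "b \<in> D2"
    and eq: "cls (glue_rel Y g1 g2) (Inl a) = cls (glue_rel Y g1 g2) (Inr b)"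
  shows "glued Y g1 g2 (Inl a) (Inr b) \<or> glued Y g1 g2 (Inr b) (Inl a)"
proof -
  define R where "R = glue_rel Y g1 g2"
  define Q where "Q = (\<exists>c\<in>D2. (glued Y g1 g2 (Inl a) (Inr c) \<or> glued Y g1 g2 (Inr c) (Inl a))
                        \<and> cls R (Inr c) = cls R (Inl a))"
  have main: "z = Inl a \<or> Q" if "(Inl a, z) \<in> (R \<union> R\<inverse>)\<^sup>*" for z
    using that
  proof (induction rule: rtrancl_induct)
    case base
    then show ?case by simp
  next
    case (step z w)
    have cw: "cls R w = cls R (Inl a)"
      using cls_eq_rt[OF rtrancl_into_rtrancl[OF step.hyps]] by simp
    show ?case
    proof (cases Q)
      case True then show ?thesis by simp
    next
      case False
      with step.IH have z: "z = Inl a" by simp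
      from step.hyps(2) z obtain y where y: "y \<in> Y"
        and yy: "(g1 y = Inl a \<and> g2 y = w) \<or> (g2 y = Inl a \<and> g1 y = w)"
        by (auto simp: R_def glue_rel_def)
      have wD: "w \<in> D1 <+> D2" using yy y img1 img2 by auto
      show ?thesis
      proof (cases w)
        case (Inl a')
        with wD have "a' \<in> D1" by auto
        with cw Inl a inj1 have "a' = a" unfolding R_def by (metis comp_apply inj_onD)
        then show ?thesis using Inl by simp
      next
        case (Inr c)
        with wD have "c \<in> D2" by auto
        moreover have "glued Y g1 g2 (Inl a) (Inr c) \<or> glued Y g1 g2 (Inr c) (Inl a)"
          using yy y Inr unfolding glued_def by auto
        ultimately have Q using cw Inr unfolding Q_def by blast
        then show ?thesis by simp
      qed
    qed
  qed
  have "(Inl a, Inr b) \<in> (R \<union> R\<inverse>)\<^sup>*"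
    using eq unfolding R_def cls_def by (metis mem_Collect_eq rtrancl.rtrancl_refl)
  from main[OF this] have Q by simp
  then obtain c where c: "c \<in> D2" and gl: "glued Y g1 g2 (Inl a) (Inr c) \<or> glued Y g1 g2 (Inr c) (Inl a)"
    and cc: "cls R (Inr c) = cls R (Inl a)" unfolding Q_def by blast
  have "c = b" using inj2 c b cc eq unfolding R_def by (metis comp_apply inj_onD)
  with gl show ?thesis by simp
qed


lemma card_le1_eq:
  assumes "finite X" "card X \<le> 1" "p \<in> X" "q \<in> X"
  shows "p = q"
  using assms card_le_Suc0_iff_eq by (metis One_nat_def)

lemma not_in_and_out:
  assumes hg: "hypergraph Sig L" and sc: "strongly_connected L"
    and i: "A \<in> in_nodes L" and o: "A \<in> out_nodes L"
  shows False
proof -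
  obtain es where p: "path_from_to L es A A" using sc i o unfolding strongly_connected_def by blast
  then have "hd es \<in> edges L" and "A \<in> set (src L (hd es))"
    unfolding path_from_to_def is_path_def by auto
  then obtain k where k: "k < length (src L (hd es))" "src L (hd es) ! k = A"
    by (metis in_set_conv_nth)
  have fin: "finite {(e, i). e \<in> edges L \<and> i < length (src L e) \<and> src L e ! i = A}"
    using hg unfolding hypergraph_def by (intro fin_pairs) auto
  have "(hd es, k) \<in> {(e, i). e \<in> edges L \<and> i < length (src L e) \<and> src L e ! i = A}"
    using k \<open>hd es \<in> edges L\<close> by auto
  then have "outdeg L A > 0" unfolding outdeg_def using fin card_gt_0_iff by blast
  with o show False unfolding out_nodes_def by simp
qed

lemma deg_pos_src:
  assumes "outdeg L A \<noteq> 0"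
  shows "\<exists>e\<in>edges L. \<exists>k<length (src L e). src L e ! k = A"
proof -
  have "{(e, i). e \<in> edges L \<and> i < length (src L e) \<and> src L e ! i = A} \<noteq> {}"
    using assms unfolding outdeg_def by (metis card.empty)
  then show ?thesis by auto
qed

lemma deg_pos_tgt:
  assumes "indeg L A \<noteq> 0"
  shows "\<exists>e\<in>edges L. \<exists>k<length (tgt L e). tgt L e ! k = A"
proof -
  have "{(e, i). e \<in> edges L \<and> i < length (tgt L e) \<and> tgt L e ! i = A} \<noteq> {}"
    using assms unfolding indeg_def by (metis card.empty)
  then show ?thesis by auto
qed

theorem mainTheorem2:
  fixes Sig :: "'l signature" and Rs :: "('v, 'e, 'w, 'l) rule set"
    and r1 r2 :: "('v, 'e, 'w, 'l) rule"
    and G :: "('u, 'f, 'l) hyp"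
    and g1V g2V :: "'u \<Rightarrow> 'v + 'v" and g1E g2E :: "'f \<Rightarrow> 'e + 'e"
    and A B :: 'v
  assumes "left_connected_system Sig Rs" and "r1 \<in> Rs" and "r2 \<in> Rs"
    and "gluing_scheme Sig G (lhs r1) (lhs r2) g1V g1E g2V g2E"
    and "yields_pcp G (lhs r1) (lhs r2) g1V g1E g2V g2E"
    and "A \<in> nodes (lhs r1)" and "B \<in> nodes (lhs r2)"
    and "glued (nodes G) g1V g2V (Inl A) (Inr B) \<or> glued (nodes G) g1V g2V (Inr B) (Inl A)"
  shows "(\<exists>e1\<in>edges (lhs r1). \<exists>e2\<in>edges (lhs r2).
            (glued (edges G) g1E g2E (Inl e1) (Inr e2) \<or> glued (edges G) g1E g2E (Inr e2) (Inl e1)) \<and>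
            (\<exists>k. k < length (src (lhs r1) e1) \<and> k < length (src (lhs r2) e2) \<and>
                 src (lhs r1) e1 ! k = A \<and> src (lhs r2) e2 ! k = B))
       \<or> (\<exists>e1\<in>edges (lhs r1). \<exists>e2\<in>edges (lhs r2).
            (glued (edges G) g1E g2E (Inl e1) (Inr e2) \<or> glued (edges G) g1E g2E (Inr e2) (Inl e1)) \<and>
            (\<exists>i. i < length (tgt (lhs r1) e1) \<and> i < length (tgt (lhs r2) e2) \<and>
                 tgt (lhs r1) e1 ! i = A \<and> tgt (lhs r2) e2 ! i = B))
       \<or> (A \<in> out_nodes (lhs r1) \<and> B \<in> in_nodes (lhs r2))
       \<or> (A \<in> in_nodes (lhs r1) \<and> B \<in> out_nodes (lhs r2))"
proof -
  let ?L1 = "lhs r1" and ?L2 = "lhs r2"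
  let ?H = "hsum ?L1 ?L2"
  define S where "S = coeq G ?H g1V g1E g2V g2E"
  define eV where "eV = cls (glue_rel (nodes G) g1V g2V)"
  define eE where "eE = cls (glue_rel (edges G) g1E g2E)"
  have lc1: "left_connected_rule Sig r1" and lc2: "left_connected_rule Sig r2"
    using assms(1-3) unfolding left_connected_system_def by auto
  have hg1: "hypergraph Sig ?L1" and sc1: "strongly_connected ?L1"
    using lc1 unfolding left_connected_rule_def by auto
  have hg2: "hypergraph Sig ?L2" and sc2: "strongly_connected ?L2"
    using lc2 unfolding left_connected_rule_def by auto
  have m1: "mono_hom ?L1 S (eV \<circ> Inl) (eE \<circ> Inl)"
    and m2: "mono_hom ?L2 S (eV \<circ> Inr) (eE \<circ> Inr)"
    and maS: "ma S"
    using assms(5) unfolding yields_pcp_def S_def eV_def eE_def Let_def ma_cospan_def by auto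
  have h1: "hom ?L1 S (eV \<circ> Inl) (eE \<circ> Inl)" and h2: "hom ?L2 S (eV \<circ> Inr) (eE \<circ> Inr)"
    using m1 m2 unfolding mono_hom_def by auto
  have gh1: "hom G ?H g1V g1E" and gh2: "hom G ?H g2V g2E"
    using assms(4) unfolding gluing_scheme_def by auto
  have img1: "g1E ` edges G \<subseteq> edges ?L1 <+> edges ?L2"
    and img2: "g2E ` edges G \<subseteq> edges ?L1 <+> edges ?L2"
    using gh1 gh2 unfolding hom_def hsum_def by auto
  have xeq: "eV (Inl A) = eV (Inr B)"
    using assms(8) unfolding glued_def eV_def by (metis glue_cls_eq)
  have xS: "eV (Inl A) \<in> nodes S" using h1 assms(6) unfolding hom_def by auto
  have finH: "finite (edges ?H)" using hg1 hg2 unfolding hypergraph_def hsum_def by auto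
  have finS: "finite (edges S)" using finH unfolding S_def coeq_def Let_def by simp
  have od: "outdeg S (eV (Inl A)) \<le> 1" and idg: "indeg S (eV (Inl A)) \<le> 1"
    using maS xS unfolding ma_def by auto
  have inj1: "inj_on (eE \<circ> Inl) (edges ?L1)" and inj2: "inj_on (eE \<circ> Inr) (edges ?L2)"
    using m1 m2 unfolding mono_hom_def by auto
  have caseA: ?thesis if a: "outdeg ?L1 A \<noteq> 0" and b: "outdeg ?L2 B \<noteq> 0"
  proof -
    obtain e1 k where e1: "e1 \<in> edges ?L1" "k < length (src ?L1 e1)" "src ?L1 e1 ! k = A"
      using deg_pos_src[OF a] by blast
    obtain e2 j where e2: "e2 \<in> edges ?L2" "j < length (src ?L2 e2)" "src ?L2 e2 ! j = B"
      using deg_pos_src[OF b] by blast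
    have s1: "src S (eE (Inl e1)) = map (eV \<circ> Inl) (src ?L1 e1)" and c1: "eE (Inl e1) \<in> edges S"
      using h1 e1(1) unfolding hom_def by auto
    have s2: "src S (eE (Inr e2)) = map (eV \<circ> Inr) (src ?L2 e2)" and c2: "eE (Inr e2) \<in> edges S"
      using h2 e2(1) unfolding hom_def by auto
    let ?X = "{(e, i). e \<in> edges S \<and> i < length (src S e) \<and> src S e ! i = eV (Inl A)}"
    have "(eE (Inl e1), k) \<in> ?X" using s1 c1 e1 by auto
    moreover have "(eE (Inr e2), j) \<in> ?X" using s2 c2 e2 xeq by auto
    ultimately have "(eE (Inl e1), k) = (eE (Inr e2), j)"
      using card_le1_eq[OF fin_pairs[OF finS, of "src S" "\<lambda>e i. src S e ! i = eV (Inl A)"]] od unfolding outdeg_def by blast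
    then have ee: "eE (Inl e1) = eE (Inr e2)" and kj: "k = j" by auto
    have "glued (edges G) g1E g2E (Inl e1) (Inr e2) \<or> glued (edges G) g1E g2E (Inr e2) (Inl e1)"
      by (rule glued_from_cls[OF img1 img2 inj1[unfolded eE_def] inj2[unfolded eE_def] e1(1) e2(1)])
         (use ee in \<open>simp add: eE_def\<close>)
    then show ?thesis using e1 e2 kj by blast
  qed
  have caseB: ?thesis if a: "indeg ?L1 A \<noteq> 0" and b: "indeg ?L2 B \<noteq> 0"
  proof -
    obtain e1 k where e1: "e1 \<in> edges ?L1" "k < length (tgt ?L1 e1)" "tgt ?L1 e1 ! k = A"
      using deg_pos_tgt[OF a] by blast
    obtain e2 j where e2: "e2 \<in> edges ?L2" "j < length (tgt ?L2 e2)" "tgt ?L2 e2 ! j = B"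
      using deg_pos_tgt[OF b] by blast
    have s1: "tgt S (eE (Inl e1)) = map (eV \<circ> Inl) (tgt ?L1 e1)" and c1: "eE (Inl e1) \<in> edges S"
      using h1 e1(1) unfolding hom_def by auto
    have s2: "tgt S (eE (Inr e2)) = map (eV \<circ> Inr) (tgt ?L2 e2)" and c2: "eE (Inr e2) \<in> edges S"
      using h2 e2(1) unfolding hom_def by auto
    let ?X = "{(e, i). e \<in> edges S \<and> i < length (tgt S e) \<and> tgt S e ! i = eV (Inl A)}"
    have "(eE (Inl e1), k) \<in> ?X" using s1 c1 e1 by auto
    moreover have "(eE (Inr e2), j) \<in> ?X" using s2 c2 e2 xeq by auto
    ultimately have "(eE (Inl e1), k) = (eE (Inr e2), j)"
      using card_le1_eq[OF fin_pairs[OF finS, of "tgt S" "\<lambda>e i. tgt S e ! i = eV (Inl A)"]] idg unfolding indeg_def by blast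
    then have ee: "eE (Inl e1) = eE (Inr e2)" and kj: "k = j" by auto
    have "glued (edges G) g1E g2E (Inl e1) (Inr e2) \<or> glued (edges G) g1E g2E (Inr e2) (Inl e1)"
      by (rule glued_from_cls[OF img1 img2 inj1[unfolded eE_def] inj2[unfolded eE_def] e1(1) e2(1)])
         (use ee in \<open>simp add: eE_def\<close>)
    then show ?thesis using e1 e2 kj by blast
  qed
  have nA: "\<not> (A \<in> in_nodes ?L1 \<and> A \<in> out_nodes ?L1)"
    using not_in_and_out[OF hg1 sc1] by blast
  have nB: "\<not> (B \<in> in_nodes ?L2 \<and> B \<in> out_nodes ?L2)"
    using not_in_and_out[OF hg2 sc2] by blast
  show ?thesis
    using caseA caseB nA nB assms(6,7) unfolding in_nodes_def out_nodes_def by auto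
qed

end
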